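(* Let $\alpha\neq0$ and $u_0>0$ be real numbers. The initial value problem $$\left(r\frac{u'}{\sqrt{1-u'^2}}\right)'=r\frac{\alpha}{u\sqrt{1-u'^2}}\quad\text{for } r\in(0,\delta),\qquad u(0)=u_0,\quad u'(0)=0,$$ has a solution $u\in C^2([0,\delta])$ for some $\delta>0$, and this solution depends continuously on the initial data. *)

theory Defs
  imports "HOL-Analysis.Analysis"
begin

definition C2_on :: "real \<Rightarrow> (real \<Rightarrow> real) \<Rightarrow> (real \<Rightarrow> real) \<Rightarrow> (real \<Rightarrow> real) \<Rightarrow> bool" where
  "C2_on d u u1 u2 \<longleftrightarrow>
     (\<forall>r\<in>{0..d}. (u has_real_derivative u1 r) (at r within {0..d}) \<and>
                  (u1 has_real_derivative u2 r) (at r within {0..d})) \<and>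
     continuous_on {0..d} u2"

text \<open>u \<in> C^2([0,d]) solves the initial value problem
  (r u'/sqrt(1-u'^2))' = r alpha / (u sqrt(1-u'^2)) on (0,d), u(0)=u0, u'(0)=0.
  The equation only makes sense where u > 0 and |u'| < 1, which is required on [0,d].\<close>
definition is_solution :: "real \<Rightarrow> real \<Rightarrow> real \<Rightarrow> (real \<Rightarrow> real) \<Rightarrow> bool" where
  "is_solution \<alpha> u0 d u \<longleftrightarrow>
     (\<exists>u1 u2. C2_on d u u1 u2 \<and>
        (\<forall>r\<in>{0..d}. u r > 0 \<and> \<bar>u1 r\<bar> < 1) \<and>
        (\<forall>r\<in>{0<..<d}.
            ((\<lambda>s. s * u1 s / sqrt (1 - (u1 s)\<^sup>2)) has_real_derivative
               (r * \<alpha> / (u r * sqrt (1 - (u1 r)\<^sup>2)))) (at r)) \<and>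
        u 0 = u0 \<and> u1 0 = 0)"

end

theory Submission
  imports Defs
begin


definition clw :: "real \<Rightarrow> real" where "clw w = max (-1) (min 1 w)"
definition FF :: "real \<Rightarrow> real \<Rightarrow> real \<Rightarrow> real \<Rightarrow> real" where
  "FF \<alpha> c w v = \<alpha> * sqrt (1 + (clw w)\<^sup>2) / max v c"
definition hh :: "real \<Rightarrow> real" where "hh w = w / sqrt (1 + w\<^sup>2)"
definition hhd :: "real \<Rightarrow> real" where "hhd w = 1 / ((1 + w\<^sup>2) * sqrt (1 + w\<^sup>2))"

lemma sq1_pos: "sqrt (1 + w\<^sup>2) > (0::real)"
  by (simp add: add_pos_nonneg)

lemma abs_lt_sq1: "\<bar>w\<bar> < sqrt (1 + w\<^sup>2)"
  by (metis abs_of_nonneg less_add_one real_sqrt_abs real_sqrt_less_iff abs_ge_zero power2_abs add.commute)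

lemma hh_deriv: "(hh has_real_derivative hhd w) (at w)"
proof -
  have "((\<lambda>w. w / sqrt (1 + w\<^sup>2)) has_real_derivative
     (1 * sqrt (1 + w\<^sup>2) - w * (inverse (sqrt (1 + w\<^sup>2)) / 2 * (2 * w))) / (sqrt (1 + w\<^sup>2))\<^sup>2) (at w)"
    using sq1_pos[of w]
    by (auto intro!: derivative_eq_intros simp: power2_eq_square)
  moreover have "(1 * sqrt (1 + w\<^sup>2) - w * (inverse (sqrt (1 + w\<^sup>2)) / 2 * (2 * w))) / (sqrt (1 + w\<^sup>2))\<^sup>2 = hhd w"
    using sq1_pos[of w] unfolding hhd_def
    apply (simp add: field_simps)
    by (smt (verit) power2_eq_square real_sqrt_pow2 zero_le_power2)
  ultimately show ?thesis unfolding hh_def by simp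
qed

lemma hhd_bound: "\<bar>hhd w\<bar> \<le> 1"
proof -
  have a: "1 \<le> 1 + w\<^sup>2" by simp
  have b: "1 \<le> sqrt (1 + w\<^sup>2)" by simp
  have "1 \<le> (1 + w\<^sup>2) * sqrt (1 + w\<^sup>2)" using a b
    by (metis mult_mono mult_1 zero_le_one order_trans)
  then show ?thesis unfolding hhd_def by simp
qed

lemma hh_lip: "\<bar>hh x - hh y\<bar> \<le> \<bar>x - y\<bar>"
  using field_differentiable_bound[of UNIV hh hhd 1 x y] hh_deriv hhd_bound by auto

lemma hh_bound: "\<bar>hh w\<bar> < 1"
  using abs_lt_sq1[of w] sq1_pos[of w] unfolding hh_def by (simp add: abs_div)

lemma sq1_deriv: "((\<lambda>w. sqrt (1 + w\<^sup>2)) has_real_derivative w / sqrt (1 + w\<^sup>2)) (at w)"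
  using sq1_pos[of w]
  by (auto intro!: derivative_eq_intros simp: field_simps power2_eq_square)

lemma sq1_lip: "\<bar>sqrt (1 + x\<^sup>2) - sqrt (1 + y\<^sup>2)\<bar> \<le> \<bar>x - y\<bar>"
  using field_differentiable_bound[of UNIV "\<lambda>w. sqrt (1 + w\<^sup>2)" "\<lambda>w. w / sqrt (1 + w\<^sup>2)" 1 x y]
    sq1_deriv hh_bound[unfolded hh_def] by (auto simp: less_imp_le)

lemma clw_lip: "\<bar>clw x - clw y\<bar> \<le> \<bar>x - y\<bar>"
  unfolding clw_def by (auto simp: max_def min_def)

lemma clw_bound: "\<bar>clw x\<bar> \<le> 1"
  unfolding clw_def by (auto simp: max_def min_def)

lemma FF_bound:
  assumes "c > 0" shows "\<bar>FF \<alpha> c w v\<bar> \<le> 2 * \<bar>\<alpha>\<bar> / c"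
proof -
  have "(clw w)\<^sup>2 \<le> 1" using clw_bound[of w] by (metis power2_abs power_le_one abs_ge_zero)
  then have "sqrt (1 + (clw w)\<^sup>2) \<le> 2"
    by (smt (verit) real_sqrt_le_mono real_sqrt_four power2_eq_square)
  moreover have "max v c \<ge> c" by simp
  ultimately have "\<bar>\<alpha>\<bar> * sqrt (1 + (clw w)\<^sup>2) / max v c \<le> \<bar>\<alpha>\<bar> * 2 / max v c"
    using assms by (intro divide_right_mono mult_left_mono) auto
  also have "\<dots> \<le> \<bar>\<alpha>\<bar> * 2 / c"
    using assms \<open>max v c \<ge> c\<close> by (intro divide_left_mono) auto
  finally show ?thesis using assms unfolding FF_def
    by (simp add: abs_mult abs_div mult.commute[of 2])
qed

lemma FF_lip:
  assumes c: "c > 0"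
  shows "\<bar>FF \<alpha> c w1 v1 - FF \<alpha> c w2 v2\<bar> \<le> \<bar>\<alpha>\<bar> * (1/c + 2/c\<^sup>2) * (\<bar>w1 - w2\<bar> + \<bar>v1 - v2\<bar>)"
proof -
  define A1 where "A1 = sqrt (1 + (clw w1)\<^sup>2)"
  define A2 where "A2 = sqrt (1 + (clw w2)\<^sup>2)"
  define m1 where "m1 = max v1 c"
  define m2 where "m2 = max v2 c"
  have m1: "m1 \<ge> c" and m2: "m2 \<ge> c" unfolding m1_def m2_def by auto
  have m1p: "m1 > 0" and m2p: "m2 > 0" using m1 m2 c by auto
  have dA: "\<bar>A1 - A2\<bar> \<le> \<bar>w1 - w2\<bar>"
    unfolding A1_def A2_def using sq1_lip[of "clw w1" "clw w2"] clw_lip[of w1 w2] by linarith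
  have "(clw w2)\<^sup>2 \<le> 1" using clw_bound[of w2] by (metis power2_abs power_le_one abs_ge_zero)
  then have A2b: "A2 \<le> 2" unfolding A2_def
    by (smt (verit) real_sqrt_le_mono real_sqrt_four power2_eq_square)
  have A2p: "A2 \<ge> 0" unfolding A2_def by simp
  have dm: "\<bar>m1 - m2\<bar> \<le> \<bar>v1 - v2\<bar>" unfolding m1_def m2_def by (auto simp: max_def)
  have e1: "\<bar>(A1 - A2) / m1\<bar> \<le> \<bar>w1 - w2\<bar> / c"
  proof -
    have "\<bar>(A1 - A2) / m1\<bar> = \<bar>A1 - A2\<bar> / m1" using m1p by (simp add: abs_div)
    also have "\<dots> \<le> \<bar>w1 - w2\<bar> / m1" using dA m1p by (simp add: divide_right_mono)
    also have "\<dots> \<le> \<bar>w1 - w2\<bar> / c" using m1 c by (intro divide_left_mono) auto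
    finally show ?thesis .
  qed
  have e2: "\<bar>1/m1 - 1/m2\<bar> \<le> \<bar>v1 - v2\<bar> / c\<^sup>2"
  proof -
    have "1/m1 - 1/m2 = (m2 - m1) / (m1 * m2)" using m1p m2p by (simp add: field_simps)
    then have "\<bar>1/m1 - 1/m2\<bar> = \<bar>m1 - m2\<bar> / (m1 * m2)" using m1p m2p by (simp add: abs_div abs_minus_commute)
    also have "\<dots> \<le> \<bar>v1 - v2\<bar> / (m1 * m2)" using dm m1p m2p by (simp add: divide_right_mono)
    also have "\<dots> \<le> \<bar>v1 - v2\<bar> / c\<^sup>2" using m1 m2 c
      by (intro divide_left_mono) (auto simp: power2_eq_square intro: mult_mono)
    finally show ?thesis .
  qed
  have "FF \<alpha> c w1 v1 - FF \<alpha> c w2 v2 = \<alpha> * ((A1 - A2) / m1 + A2 * (1/m1 - 1/m2))"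
    unfolding FF_def A1_def[symmetric] A2_def[symmetric] m1_def[symmetric] m2_def[symmetric]
    using m1p m2p by (simp add: field_simps)
  then have "\<bar>FF \<alpha> c w1 v1 - FF \<alpha> c w2 v2\<bar> \<le> \<bar>\<alpha>\<bar> * (\<bar>(A1 - A2) / m1\<bar> + A2 * \<bar>1/m1 - 1/m2\<bar>)"
    using A2p by (simp add: abs_mult mult_left_mono abs_triangle_ineq[THEN order_trans])
  also have "\<dots> \<le> \<bar>\<alpha>\<bar> * (\<bar>w1 - w2\<bar> / c + 2 * (\<bar>v1 - v2\<bar> / c\<^sup>2))"
    using e1 e2 A2b A2p by (intro mult_left_mono add_mono mult_mono) auto
  also have "\<dots> \<le> \<bar>\<alpha>\<bar> * (1/c + 2/c\<^sup>2) * (\<bar>w1 - w2\<bar> + \<bar>v1 - v2\<bar>)"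
    using c by (simp add: field_simps mult_left_mono)
  finally show ?thesis .
qed



definition QQ :: "(real \<Rightarrow> real) \<Rightarrow> real \<Rightarrow> real" where
  "QQ f r = integral {0..1} (\<lambda>t. t * f (r * t))"
definition WW :: "(real \<Rightarrow> real) \<Rightarrow> real \<Rightarrow> real" where
  "WW f r = r * QQ f r"
definition PP :: "(real \<Rightarrow> real) \<Rightarrow> real \<Rightarrow> real" where
  "PP f r = integral {0..r} (\<lambda>s. s * f s)"

lemma QQ_cont:
  assumes f: "continuous_on UNIV f"
  shows "continuous_on UNIV (QQ f)"
proof -
  have "continuous_on (UNIV \<times> cbox 0 1) (\<lambda>(x, t). t * f (x * t))"
    by (auto intro!: continuous_intros continuous_on_compose2[OF f] simp: split_beta)
  from integral_continuous_on_param[OF this] show ?thesis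
    unfolding QQ_def by simp
qed

lemma cont_comp_lin:
  fixes f :: "real \<Rightarrow> real" and S :: "real set"
  assumes f: "continuous_on UNIV f"
  shows "continuous_on S (\<lambda>t. t * f (r * t))"
proof -
  have "continuous_on S (\<lambda>t. f (r * t))"
    by (rule continuous_on_compose2[OF f _ subset_UNIV])
       (use continuous_on_mult_left[OF continuous_on_id, of S r] in \<open>simp add: id_def\<close>)
  then show ?thesis by (intro continuous_intros)
qed

lemma QQ_integrable:
  fixes f :: "real \<Rightarrow> real"
  assumes f: "continuous_on UNIV f"
  shows "(\<lambda>t. t * f (r * t)) integrable_on {0..1}"
  by (rule integrable_continuous_interval) (rule cont_comp_lin[OF f])

lemma QQ_bound:
  fixes f :: "real \<Rightarrow> real"
  assumes f: "continuous_on UNIV f" and b: "\<And>x. \<bar>f x\<bar> \<le> M"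
  shows "\<bar>QQ f r\<bar> \<le> M"
proof -
  have "norm (integral {0..1} (\<lambda>t. t * f (r * t))) \<le> M * (1 - 0)"
  proof (rule integral_bound)
    show "continuous_on {0..1} (\<lambda>t. t * f (r * t))" by (rule cont_comp_lin[OF f])
    fix t :: real assume "t \<in> {0..1}"
    then have "\<bar>t\<bar> \<le> 1" by auto
    moreover have "\<bar>f (r*t)\<bar> \<le> M" by (rule b)
    ultimately have "\<bar>t\<bar> * \<bar>f (r*t)\<bar> \<le> 1 * M"
      by (intro mult_mono) auto
    then show "norm (t * f (r * t)) \<le> M" by (simp add: abs_mult)
  qed simp
  then show ?thesis unfolding QQ_def by simp
qed

lemma QQ_diff:
  fixes f g :: "real \<Rightarrow> real"
  assumes f: "continuous_on UNIV f" and g: "continuous_on UNIV g"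
  shows "QQ f r - QQ g r = QQ (\<lambda>x. f x - g x) r"
proof -
  have "QQ (\<lambda>x. f x - g x) r = integral {0..1} (\<lambda>t. t * f (r*t) - t * g (r*t))"
    unfolding QQ_def by (simp add: right_diff_distrib)
  also have "\<dots> = QQ f r - QQ g r" unfolding QQ_def
    by (rule integral_diff[OF QQ_integrable[OF f] QQ_integrable[OF g]])
  finally show ?thesis by simp
qed

lemma integral_id01: "integral {0..1} (\<lambda>t::real. t) = 1/2"
proof -
  have "((\<lambda>t::real. t) has_integral ((\<lambda>t. t\<^sup>2/2) 1 - (\<lambda>t. t\<^sup>2/2) 0)) {0..1}"
    by (rule fundamental_theorem_of_calculus) (auto intro!: derivative_eq_intros simp: has_real_derivative_iff_has_vector_derivative[symmetric])
  then show ?thesis by (simp add: integral_unique)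
qed

lemma QQ_zero: "QQ f 0 = f 0 / 2"
  unfolding QQ_def using integral_id01 by (simp add: integral_mult_left)


lemma PP_deriv_within:
  fixes f :: "real \<Rightarrow> real"
  assumes f: "continuous_on UNIV f" and x: "x \<in> {0..b}"
  shows "(PP f has_real_derivative x * f x) (at x within {0..b})"
proof -
  have c: "continuous_on {0..b} f" using f continuous_on_subset by blast
  have "continuous_on {0..b} (\<lambda>s. s * f s)" using c by (intro continuous_intros)
  then show ?thesis unfolding PP_def by (rule integral_has_real_derivative[OF _ x])
qed

lemma PP_deriv:
  fixes f :: "real \<Rightarrow> real"
  assumes f: "continuous_on UNIV f" and x: "x > 0"
  shows "(PP f has_real_derivative x * f x) (at x)"
proof -
  have d: "(PP f has_real_derivative x * f x) (at x within {0..x+1})"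
    using PP_deriv_within[OF f, of x "x+1"] x by simp
  have eq: "at x within {0..x+1} = at x" by (rule at_within_interior) (use x in simp)
  show ?thesis using d unfolding eq .
qed


lemma PP_eq:
  fixes f :: "real \<Rightarrow> real"
  assumes f: "continuous_on UNIV f" and r: "r > 0"
  shows "PP f r = r\<^sup>2 * QQ f r"
proof -
  have "((\<lambda>t. t * f (r * t)) has_integral ((\<lambda>t. PP f (r * t) / r\<^sup>2) 1 - (\<lambda>t. PP f (r * t) / r\<^sup>2) 0)) {0..1}"
  proof (rule fundamental_theorem_of_calculus)
    fix t :: real assume t: "t \<in> {0..1}"
    have gd: "((\<lambda>t. r * t) has_real_derivative r) (at t within {0..1})"
      by (auto intro!: derivative_eq_intros)
    have fd: "(PP f has_real_derivative (r*t) * f (r*t)) (at (r*t) within ((\<lambda>t. r * t) ` {0..1}))"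
      by (rule has_field_derivative_subset[OF PP_deriv_within[OF f, of "r*t" r]])
        (use t r in \<open>auto simp: mult_left_le\<close>)
    have "(PP f \<circ> (\<lambda>t. r * t) has_real_derivative (r*t) * f (r*t) * r) (at t within {0..1})"
      by (rule DERIV_image_chain[OF fd gd])
    then have "((\<lambda>t. PP f (r * t) / r\<^sup>2) has_real_derivative (r*t) * f (r*t) * r / r\<^sup>2) (at t within {0..1})"
      using DERIV_cdivide[of "PP f \<circ> (\<lambda>t. r * t)" "(r*t) * f (r*t) * r" t "{0..1}" "r\<^sup>2"] \<open>(PP f \<circ> (\<lambda>t. r * t) has_real_derivative (r*t) * f (r*t) * r) (at t within {0..1})\<close>
      by (simp add: o_def)
    moreover have "(r*t) * f (r*t) * r / r\<^sup>2 = t * f (r * t)" using r by (simp add: field_simps power2_eq_square)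
    ultimately show "((\<lambda>t. PP f (r * t) / r\<^sup>2) has_vector_derivative t * f (r * t)) (at t within {0..1})"
      by (simp add: has_real_derivative_iff_has_vector_derivative)
  qed simp
  then have "QQ f r = PP f r / r\<^sup>2" unfolding QQ_def by (simp add: integral_unique PP_def)
  then show ?thesis using r by simp
qed


lemma WW_deriv:
  fixes f :: "real \<Rightarrow> real"
  assumes f: "continuous_on UNIV f" and r: "r \<ge> 0"
  shows "(WW f has_real_derivative f r - QQ f r) (at r)"
proof (cases "r = 0")
  case True
  have "((\<lambda>y. (WW f y - WW f 0) / (y - 0)) \<longlongrightarrow> QQ f 0) (at 0)"
  proof (rule Lim_transform_eventually)
    show "(QQ f \<longlongrightarrow> QQ f 0) (at 0)"
      using QQ_cont[OF f] by (simp add: continuous_on_def)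
    show "\<forall>\<^sub>F x in at 0. QQ f x = (WW f x - WW f 0) / (x - 0)"
      by (auto simp: eventually_at_filter WW_def)
  qed
  then have "(WW f has_real_derivative QQ f 0) (at 0)"
    by (simp add: has_field_derivative_iff)
  moreover have eq: "f 0 - QQ f 0 = QQ f 0" by (simp add: QQ_zero)
  ultimately show ?thesis unfolding True eq by blast
next
  case False
  then have r: "r > 0" using r by simp
  have "((\<lambda>x. PP f x / x) has_real_derivative (r * f r * r - PP f r * 1) / (r * r)) (at r)"
    by (rule DERIV_divide[OF PP_deriv[OF f r] DERIV_ident]) (use r in simp)
  moreover have "(r * f r * r - PP f r * 1) / (r * r) = f r - QQ f r"
    using PP_eq[OF f r] r by (simp add: field_simps power2_eq_square)
  ultimately have d: "((\<lambda>x. PP f x / x) has_real_derivative f r - QQ f r) (at r)" by simp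
  show ?thesis
  proof (rule has_field_derivative_transform_within_open[OF d, of "{0<..}"])
    fix x :: real assume "x \<in> {0<..}"
    then show "PP f x / x = WW f x" using PP_eq[OF f, of x] by (simp add: WW_def power2_eq_square)
  qed (use r in auto)
qed



definition UU :: "real \<Rightarrow> (real \<Rightarrow> real) \<Rightarrow> real \<Rightarrow> real" where
  "UU a f r = a + integral {0..r} (\<lambda>s. hh (WW f s))"
definition clp :: "real \<Rightarrow> real \<Rightarrow> real" where
  "clp \<delta> r = max 0 (min \<delta> r)"
definition TT :: "real \<Rightarrow> real \<Rightarrow> real \<Rightarrow> (real \<Rightarrow> real) \<Rightarrow> real \<Rightarrow> real" where
  "TT \<alpha> a \<delta> f r = FF \<alpha> (a/2) (WW f (clp \<delta> r)) (UU a f (clp \<delta> r))"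

lemma hh_cont: "continuous_on S hh"
  using hh_deriv by (intro continuous_at_imp_continuous_on) (auto intro: DERIV_isCont)

lemma WW_cont:
  fixes f :: "real \<Rightarrow> real"
  assumes f: "continuous_on UNIV f"
  shows "continuous_on S (WW f)"
proof -
  have "continuous_on S (QQ f)" using QQ_cont[OF f] continuous_on_subset by blast
  then have "continuous_on S (\<lambda>r. r * QQ f r)" by (intro continuous_intros)
  then show ?thesis unfolding WW_def by (simp add: o_def)
qed

lemma hhWW_cont:
  fixes f :: "real \<Rightarrow> real"
  assumes f: "continuous_on UNIV f"
  shows "continuous_on S (\<lambda>s. hh (WW f s))"
  by (rule continuous_on_compose2[OF hh_cont WW_cont[OF f] subset_UNIV])

lemma UU_cont:
  fixes f :: "real \<Rightarrow> real"
  assumes f: "continuous_on UNIV f"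
  shows "continuous_on {0..\<delta>} (UU a f)"
proof -
  have "(\<lambda>s. hh (WW f s)) integrable_on {0..\<delta>}"
    by (rule integrable_continuous_interval[OF hhWW_cont[OF f]])
  then have "continuous_on {0..\<delta>} (\<lambda>x. integral {0..x} (\<lambda>s. hh (WW f s)))"
    by (rule indefinite_integral_continuous_1)
  then show ?thesis unfolding UU_def by (intro continuous_intros)
qed

lemma clp_cont: "continuous_on S (clp \<delta>)"
  unfolding clp_def by (intro continuous_intros)

lemma clp_range: "\<delta> \<ge> 0 \<Longrightarrow> clp \<delta> r \<in> {0..\<delta>}"
  unfolding clp_def by auto

lemma clp_id: "r \<in> {0..\<delta>} \<Longrightarrow> clp \<delta> r = r"
  unfolding clp_def by auto

lemma TT_bcontfun:
  fixes f :: "real \<Rightarrow> real"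
  assumes f: "continuous_on UNIV f" and a: "a > 0" and d: "\<delta> \<ge> 0"
  shows "TT \<alpha> a \<delta> f \<in> bcontfun"
proof -
  have c1: "continuous_on UNIV (\<lambda>r. WW f (clp \<delta> r))"
    by (rule continuous_on_compose2[OF WW_cont[OF f] clp_cont subset_UNIV])
  have c2: "continuous_on UNIV (\<lambda>r. UU a f (clp \<delta> r))"
    by (rule continuous_on_compose2[OF UU_cont[OF f, where \<delta>=\<delta>] clp_cont]) (use clp_range[OF d] in auto)
  have "continuous_on UNIV (\<lambda>r. \<alpha> * sqrt (1 + (max (-1) (min 1 (WW f (clp \<delta> r))))\<^sup>2) / max (UU a f (clp \<delta> r)) (a/2))"
    using a by (intro continuous_intros c1 c2) auto
  then have "continuous_on UNIV (TT \<alpha> a \<delta> f)"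
    unfolding TT_def FF_def clw_def by simp
  moreover have "bounded (range (TT \<alpha> a \<delta> f))"
    unfolding bounded_iff using FF_bound[of "a/2" \<alpha>] a unfolding TT_def by auto
  ultimately show ?thesis unfolding bcontfun_def by simp
qed

lemma TT_contr:
  fixes f g :: "real \<Rightarrow> real"
  assumes f: "continuous_on UNIV f" and g: "continuous_on UNIV g" and a: "a > 0"
    and d: "\<delta> \<ge> 0" and D: "\<And>y. \<bar>f y - g y\<bar> \<le> D"
  shows "\<bar>TT \<alpha> a \<delta> f x - TT \<alpha> a \<delta> g x\<bar> \<le> \<bar>\<alpha>\<bar> * (1/(a/2) + 2/(a/2)\<^sup>2) * ((\<delta> + \<delta>\<^sup>2) * D)"
proof -
  define s where "s = clp \<delta> x"
  have s: "s \<in> {0..\<delta>}" unfolding s_def by (rule clp_range[OF d])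
  have D0: "D \<ge> 0" using D[of 0] by linarith
  have fg: "continuous_on UNIV (\<lambda>x. f x - g x)" using f g by (intro continuous_intros)
  have dW: "\<bar>WW f y - WW g y\<bar> \<le> \<delta> * D" if y: "y \<in> {0..\<delta>}" for y
  proof -
    have "WW f y - WW g y = y * QQ (\<lambda>x. f x - g x) y"
      unfolding WW_def QQ_diff[OF f g, symmetric] by (simp add: algebra_simps)
    also have "\<bar>\<dots>\<bar> \<le> \<delta> * D"
      unfolding abs_mult using y QQ_bound[OF fg D, of y] D0 by (intro mult_mono) auto
    finally show ?thesis .
  qed
  have dU: "\<bar>UU a f s - UU a g s\<bar> \<le> \<delta>\<^sup>2 * D"
  proof -
    have "UU a f s - UU a g s = integral {0..s} (\<lambda>y. hh (WW f y) - hh (WW g y))"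
      unfolding UU_def
      by (simp add: integral_diff[OF integrable_continuous_interval[OF hhWW_cont[OF f]]
            integrable_continuous_interval[OF hhWW_cont[OF g]]])
    also have "\<bar>\<dots>\<bar> \<le> (\<delta> * D) * (s - 0)"
    proof -
      have "norm (integral {0..s} (\<lambda>y. hh (WW f y) - hh (WW g y))) \<le> (\<delta> * D) * (s - 0)"
      proof (rule integral_bound)
        show "0 \<le> s" using s by simp
        show "continuous_on {0..s} (\<lambda>y. hh (WW f y) - hh (WW g y))"
          by (intro continuous_intros hhWW_cont f g)
        fix t assume "t \<in> {0..s}"
        then have "t \<in> {0..\<delta>}" using s by auto
        then show "norm (hh (WW f t) - hh (WW g t)) \<le> \<delta> * D"
          using hh_lip[of "WW f t" "WW g t"] dW[of t] by simp
      qed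
      then show ?thesis by simp
    qed
    also have "\<dots> \<le> \<delta>\<^sup>2 * D"
      using s D0 d by (simp add: power2_eq_square mult_left_mono mult_right_mono mult.commute mult.left_commute)
    finally show ?thesis .
  qed
  have "\<bar>TT \<alpha> a \<delta> f x - TT \<alpha> a \<delta> g x\<bar> \<le> \<bar>\<alpha>\<bar> * (1/(a/2) + 2/(a/2)\<^sup>2) * (\<bar>WW f s - WW g s\<bar> + \<bar>UU a f s - UU a g s\<bar>)"
    unfolding TT_def s_def[symmetric] using a by (intro FF_lip) simp
  also have "\<dots> \<le> \<bar>\<alpha>\<bar> * (1/(a/2) + 2/(a/2)\<^sup>2) * ((\<delta> + \<delta>\<^sup>2) * D)"
    using dW[OF s] dU a by (intro mult_left_mono) (auto simp: algebra_simps)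
  finally show ?thesis .
qed



lemma fixed_point:
  fixes \<alpha> a \<delta> :: real
  assumes a: "a > 0" and d: "\<delta> \<ge> 0"
    and K: "\<bar>\<alpha>\<bar> * (1/(a/2) + 2/(a/2)\<^sup>2) * (\<delta> + \<delta>\<^sup>2) \<le> 1/2"
  shows "\<exists>f. continuous_on UNIV f \<and> (\<forall>x. TT \<alpha> a \<delta> f x = f x)"
proof -
  define T where "T = (\<lambda>fb::real \<Rightarrow>\<^sub>C real. Bcontfun (TT \<alpha> a \<delta> (apply_bcontfun fb)))"
  have app: "apply_bcontfun (T fb) = TT \<alpha> a \<delta> (apply_bcontfun fb)" for fb
    unfolding T_def by (rule Bcontfun_inverse[OF TT_bcontfun[OF continuous_on_apply_bcontfun a d]])
  have L0: "\<bar>\<alpha>\<bar> * (1/(a/2) + 2/(a/2)\<^sup>2) \<ge> 0" using a by simp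
  have contr: "\<forall>f. \<forall>g. dist (T f) (T g) \<le> (1/2) * dist f g"
  proof (intro allI)
    fix f g :: "real \<Rightarrow>\<^sub>C real"
    show "dist (T f) (T g) \<le> (1/2) * dist f g"
    proof (rule dist_bound)
      fix x
      have D: "\<bar>apply_bcontfun f y - apply_bcontfun g y\<bar> \<le> dist f g" for y
        using dist_bounded[of f y g] by (simp add: dist_real_def)
      have "\<bar>TT \<alpha> a \<delta> f x - TT \<alpha> a \<delta> g x\<bar> \<le> \<bar>\<alpha>\<bar> * (1/(a/2) + 2/(a/2)\<^sup>2) * ((\<delta> + \<delta>\<^sup>2) * dist f g)"
        by (rule TT_contr[OF continuous_on_apply_bcontfun continuous_on_apply_bcontfun a d D])
      also have "\<dots> = (\<bar>\<alpha>\<bar> * (1/(a/2) + 2/(a/2)\<^sup>2) * (\<delta> + \<delta>\<^sup>2)) * dist f g" by (simp only: mult.assoc)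
      also have "\<dots> \<le> (1/2) * dist f g" using K by (intro mult_right_mono) auto
      finally show "dist (T f x) (T g x) \<le> (1/2) * dist f g"
        unfolding app by (simp add: dist_real_def)
    qed
  qed
  obtain fb where fb: "T fb = fb"
    using banach_fix_type[of "1/2" T] contr by auto
  show ?thesis
  proof (intro exI conjI allI)
    show "continuous_on UNIV (apply_bcontfun fb)" by simp
    fix x show "TT \<alpha> a \<delta> (apply_bcontfun fb) x = apply_bcontfun fb x"
      using app[of fb] fb by simp
  qed
qed



lemma hh_sqrt: "sqrt (1 - (hh w)\<^sup>2) = 1 / sqrt (1 + w\<^sup>2)"
proof -
  have p: "1 + w\<^sup>2 > 0" by (simp add: add_pos_nonneg)
  have "1 - (hh w)\<^sup>2 = 1 / (1 + w\<^sup>2)"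
    unfolding hh_def using p by (simp add: power_divide field_simps)
  then show ?thesis by (simp add: real_sqrt_divide)
qed

lemma hh_inv: "hh w / sqrt (1 - (hh w)\<^sup>2) = w"
  unfolding hh_sqrt unfolding hh_def using sq1_pos[of w] by simp

lemma hhd_cont: "continuous_on S hhd"
proof -
  have "continuous_on S (\<lambda>w. 1 / ((1 + w\<^sup>2) * sqrt (1 + w\<^sup>2)))"
  proof -
    have nz: "(1 + w\<^sup>2) * sqrt (1 + w\<^sup>2) \<noteq> 0" for w :: real
    proof -
      have "1 + w\<^sup>2 \<noteq> 0" by (smt (verit) zero_le_power2)
      then show ?thesis by simp
    qed
    show ?thesis by (intro continuous_intros) (use nz in auto)
  qed
  then show ?thesis unfolding hhd_def by simp
qed

lemma exist1:
  fixes \<alpha> a :: real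
  assumes a: "a > 0"
  shows "\<exists>\<delta>>0. \<exists>u. is_solution \<alpha> a \<delta> u"
proof -
  define c where "c = a/2"
  define L where "L = \<bar>\<alpha>\<bar> * (1/(a/2) + 2/(a/2)\<^sup>2)"
  define M where "M = 2 * \<bar>\<alpha>\<bar> / c"
  define \<delta> where "\<delta> = min (min 1 (a/2)) (min (1/(4*L+1)) (1/(2*M+1)))"
  have c: "c > 0" unfolding c_def using a by simp
  have L0: "L \<ge> 0" unfolding L_def using a by simp
  have M0: "M \<ge> 0" unfolding M_def using c by simp
  have d0: "\<delta> > 0" unfolding \<delta>_def using a L0 M0 by simp
  have d1: "\<delta> \<le> 1" and d2: "\<delta> \<le> a/2" and d3: "\<delta> \<le> 1/(4*L+1)" and d4: "\<delta> \<le> 1/(2*M+1)"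
    unfolding \<delta>_def by auto
  have "\<delta>\<^sup>2 \<le> \<delta>" using d0 d1 by (simp add: power2_eq_square mult_left_le)
  then have "L * (\<delta> + \<delta>\<^sup>2) \<le> L * (2 * \<delta>)" using L0 by (intro mult_left_mono) auto
  also have "\<dots> \<le> L * (2 * (1/(4*L+1)))" using L0 d3 by (intro mult_left_mono) auto
  also have "\<dots> \<le> 1/2" using L0 by (simp add: field_simps)
  finally have K: "L * (\<delta> + \<delta>\<^sup>2) \<le> 1/2" .
  have dM: "\<delta> * M \<le> 1/2"
  proof -
    have "\<delta> * M \<le> (1/(2*M+1)) * M" using d4 M0 by (intro mult_right_mono) auto
    also have "\<dots> \<le> 1/2" using M0 by (simp add: field_simps)
    finally show ?thesis .
  qed
  obtain f where f: "continuous_on UNIV f" and fxp: "\<And>x. TT \<alpha> a \<delta> f x = f x"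
    using fixed_point[of a \<delta> \<alpha>] a d0 K unfolding L_def by auto
  have fb: "\<bar>f x\<bar> \<le> M" for x
    using FF_bound[OF c, of \<alpha>] fxp[of x] unfolding TT_def M_def c_def by metis
  have Wb: "\<bar>WW f r\<bar> \<le> 1/2" if r: "r \<in> {0..\<delta>}" for r
  proof -
    have "\<bar>WW f r\<bar> = \<bar>r\<bar> * \<bar>QQ f r\<bar>" unfolding WW_def by (simp add: abs_mult)
    also have "\<dots> \<le> \<delta> * M" using r QQ_bound[OF f fb, of r] M0 by (intro mult_mono) auto
    finally show ?thesis using dM by simp
  qed
  have Ub: "\<bar>UU a f r - a\<bar> \<le> \<delta>" if r: "r \<in> {0..\<delta>}" for r
  proof -
    have "norm (integral {0..r} (\<lambda>s. hh (WW f s))) \<le> 1 * (r - 0)"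
    proof (rule integral_bound)
      show "0 \<le> r" using r by simp
      show "continuous_on {0..r} (\<lambda>s. hh (WW f s))" by (rule hhWW_cont[OF f])
      fix t show "norm (hh (WW f t)) \<le> 1" using hh_bound[of "WW f t"] by simp
    qed
    then show ?thesis using r unfolding UU_def by simp
  qed
  have Upos: "UU a f r \<ge> c" if r: "r \<in> {0..\<delta>}" for r
    using Ub[OF r] d2 unfolding c_def by linarith
  have feq: "f r = \<alpha> * sqrt (1 + (WW f r)\<^sup>2) / UU a f r" if r: "r \<in> {0..\<delta>}" for r
  proof -
    have "clw (WW f r) = WW f r" using Wb[OF r] unfolding clw_def by auto
    moreover have "max (UU a f r) (a/2) = UU a f r" using Upos[OF r] unfolding c_def by simp
    ultimately show ?thesis using fxp[of r] clp_id[OF r] unfolding TT_def FF_def by simp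
  qed
  define u1 where "u1 = (\<lambda>r. hh (WW f r))"
  define u2 where "u2 = (\<lambda>r. hhd (WW f r) * (f r - QQ f r))"
  have C2: "C2_on \<delta> (UU a f) u1 u2"
    unfolding C2_on_def
  proof (intro conjI ballI)
    fix r assume r: "r \<in> {0..\<delta>}"
    have "((\<lambda>x. integral {0..x} (\<lambda>s. hh (WW f s))) has_real_derivative hh (WW f r)) (at r within {0..\<delta>})"
      by (rule integral_has_real_derivative[OF hhWW_cont[OF f] r])
    from DERIV_add[OF DERIV_const[of a] this]
    show "(UU a f has_real_derivative u1 r) (at r within {0..\<delta>})"
      unfolding UU_def u1_def by simp
    have "(WW f has_real_derivative f r - QQ f r) (at r within {0..\<delta>})"
      using WW_deriv[OF f, of r] r by (auto intro: has_field_derivative_at_within)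
    from DERIV_chain2[OF hh_deriv this]
    show "(u1 has_real_derivative u2 r) (at r within {0..\<delta>})"
      unfolding u1_def u2_def by simp
  next
    have "continuous_on {0..\<delta>} (\<lambda>r. hhd (WW f r))"
      by (rule continuous_on_compose2[OF hhd_cont WW_cont[OF f] subset_UNIV])
    moreover have "continuous_on {0..\<delta>} f" using f continuous_on_subset by blast
    moreover have "continuous_on {0..\<delta>} (QQ f)" using QQ_cont[OF f] continuous_on_subset by blast
    ultimately show "continuous_on {0..\<delta>} u2" unfolding u2_def by (intro continuous_intros)
  qed
  have eqn: "((\<lambda>s. s * u1 s / sqrt (1 - (u1 s)\<^sup>2)) has_real_derivative
               (r * \<alpha> / (UU a f r * sqrt (1 - (u1 r)\<^sup>2)))) (at r)" if r: "r \<in> {0<..<\<delta>}" for r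
  proof -
    have r0: "r > 0" and rr: "r \<in> {0..\<delta>}" using r by auto
    have d: "(PP f has_real_derivative r * f r) (at r)" by (rule PP_deriv[OF f r0])
    have d2: "((\<lambda>s. s * u1 s / sqrt (1 - (u1 s)\<^sup>2)) has_real_derivative r * f r) (at r)"
    proof (rule has_field_derivative_transform_within_open[OF d, of "{0<..}"])
      fix x :: real assume x: "x \<in> {0<..}"
      have "x * u1 x / sqrt (1 - (u1 x)\<^sup>2) = x * WW f x"
        unfolding u1_def using hh_inv[of "WW f x"] by (metis times_divide_eq_right)
      also have "\<dots> = PP f x" using PP_eq[OF f, of x] x by (simp add: WW_def power2_eq_square)
      finally show "PP f x = x * u1 x / sqrt (1 - (u1 x)\<^sup>2)" by simp
    qed (use r0 in auto)
    have "r * \<alpha> / (UU a f r * sqrt (1 - (u1 r)\<^sup>2)) = r * f r"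
      unfolding feq[OF rr] u1_def hh_sqrt using sq1_pos[of "WW f r"] by simp
    then show ?thesis using d2 by simp
  qed
  have "is_solution \<alpha> a \<delta> (UU a f)"
    unfolding is_solution_def
  proof (intro exI conjI ballI)
    show "C2_on \<delta> (UU a f) u1 u2" by (rule C2)
    fix r assume r: "r \<in> {0..\<delta>}"
    show "UU a f r > 0" using Upos[OF r] c by simp
    show "\<bar>u1 r\<bar> < 1" unfolding u1_def by (rule hh_bound)
  next
    fix r assume r: "r \<in> {0<..<\<delta>}"
    show "((\<lambda>s. s * u1 s / sqrt (1 - (u1 s)\<^sup>2)) has_real_derivative
               (r * \<alpha> / (UU a f r * sqrt (1 - (u1 r)\<^sup>2)))) (at r)" by (rule eqn[OF r])
  next
    show "UU a f 0 = a" unfolding UU_def by simp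
    show "u1 0 = 0" unfolding u1_def WW_def hh_def by simp
  qed
  then show ?thesis using d0 by blast
qed



lemma scale:
  fixes \<alpha> a \<delta> \<delta>' k :: real and u :: "real \<Rightarrow> real"
  assumes sol: "is_solution \<alpha> a \<delta> u" and k: "k > 0" and dk: "\<delta>' * k \<le> \<delta>"
  shows "is_solution \<alpha> (a/k) \<delta>' (\<lambda>r. u (r*k) / k)"
proof -
  obtain u1 u2 where C2: "C2_on \<delta> u u1 u2" and pos: "\<forall>r\<in>{0..\<delta>}. u r > 0 \<and> \<bar>u1 r\<bar> < 1"
    and eq: "\<forall>r\<in>{0<..<\<delta>}. ((\<lambda>s. s * u1 s / sqrt (1 - (u1 s)\<^sup>2)) has_real_derivative
               (r * \<alpha> / (u r * sqrt (1 - (u1 r)\<^sup>2)))) (at r)"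
    and u0: "u 0 = a" and u10: "u1 0 = 0"
    using sol unfolding is_solution_def by blast
  have du: "\<And>r. r \<in> {0..\<delta>} \<Longrightarrow> (u has_real_derivative u1 r) (at r within {0..\<delta>})"
    and du1: "\<And>r. r \<in> {0..\<delta>} \<Longrightarrow> (u1 has_real_derivative u2 r) (at r within {0..\<delta>})"
    and cu2: "continuous_on {0..\<delta>} u2"
    using C2 unfolding C2_on_def by auto
  have img: "(\<lambda>r. r * k) ` {0..\<delta>'} \<subseteq> {0..\<delta>}"
  proof
    fix y assume "y \<in> (\<lambda>r. r * k) ` {0..\<delta>'}"
    then obtain r where r: "r \<in> {0..\<delta>'}" and y: "y = r * k" by auto
    have "r * k \<le> \<delta>' * k" using r k by (intro mult_right_mono) auto
    then have "r * k \<le> \<delta>" using dk by linarith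
    moreover have "0 \<le> r * k" using r k by simp
    ultimately show "y \<in> {0..\<delta>}" using y by auto
  qed
  have rk: "r * k \<in> {0..\<delta>}" if "r \<in> {0..\<delta>'}" for r using img that by (meson image_eqI subsetD)
  have gd: "((\<lambda>r. r * k) has_real_derivative k) (at r within S)" for r S
    by (auto intro!: derivative_eq_intros)
  define v where "v = (\<lambda>r. u (r*k) / k)"
  define v1 where "v1 = (\<lambda>r. u1 (r*k))"
  define v2 where "v2 = (\<lambda>r. u2 (r*k) * k)"
  have C2': "C2_on \<delta>' v v1 v2"
    unfolding C2_on_def
  proof (intro conjI ballI)
    fix r assume r: "r \<in> {0..\<delta>'}"
    have "(u has_real_derivative u1 (r*k)) (at (r*k) within (\<lambda>r. r * k) ` {0..\<delta>'})"
      by (rule has_field_derivative_subset[OF du[OF rk[OF r]] img])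
    from DERIV_image_chain[OF this gd]
    have "(u \<circ> (\<lambda>r. r * k) has_real_derivative u1 (r*k) * k) (at r within {0..\<delta>'})" .
    from DERIV_cdivide[OF this, of k]
    show "(v has_real_derivative v1 r) (at r within {0..\<delta>'})"
      unfolding v_def v1_def using k by (simp add: o_def)
    have "(u1 has_real_derivative u2 (r*k)) (at (r*k) within (\<lambda>r. r * k) ` {0..\<delta>'})"
      by (rule has_field_derivative_subset[OF du1[OF rk[OF r]] img])
    from DERIV_image_chain[OF this gd]
    show "(v1 has_real_derivative v2 r) (at r within {0..\<delta>'})"
      unfolding v1_def v2_def by (simp add: o_def)
  next
    have "continuous_on {0..\<delta>'} (\<lambda>r. u2 (r * k))"
      by (rule continuous_on_compose2[OF cu2 _ img]) (intro continuous_intros)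
    then show "continuous_on {0..\<delta>'} v2" unfolding v2_def by (intro continuous_intros)
  qed
  have "is_solution \<alpha> (a/k) \<delta>' v"
    unfolding is_solution_def
  proof (intro exI conjI ballI)
    show "C2_on \<delta>' v v1 v2" by (rule C2')
    fix r assume r: "r \<in> {0..\<delta>'}"
    show "v r > 0" unfolding v_def using pos rk[OF r] k by simp
    show "\<bar>v1 r\<bar> < 1" unfolding v1_def using pos rk[OF r] by simp
  next
    fix r assume r: "r \<in> {0<..<\<delta>'}"
    have "r * k < \<delta>' * k" using r k by simp
    then have "r * k < \<delta>" using dk by linarith
    moreover have "0 < r * k" using r k by simp
    ultimately have rk': "r * k \<in> {0<..<\<delta>}" by auto
    have G: "((\<lambda>s. s * u1 s / sqrt (1 - (u1 s)\<^sup>2)) has_real_derivative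
               ((r*k) * \<alpha> / (u (r*k) * sqrt (1 - (u1 (r*k))\<^sup>2)))) (at (r*k))"
      using eq rk' by blast
    from DERIV_chain2[OF G gd[of r UNIV]]
    have "((\<lambda>s. (s*k) * u1 (s*k) / sqrt (1 - (u1 (s*k))\<^sup>2)) has_real_derivative
               ((r*k) * \<alpha> / (u (r*k) * sqrt (1 - (u1 (r*k))\<^sup>2))) * k) (at r)" by simp
    from DERIV_cdivide[OF this, of k]
    have "((\<lambda>s. (s*k) * u1 (s*k) / sqrt (1 - (u1 (s*k))\<^sup>2) / k) has_real_derivative
               ((r*k) * \<alpha> / (u (r*k) * sqrt (1 - (u1 (r*k))\<^sup>2))) * k / k) (at r)" .
    moreover have "(\<lambda>s. (s*k) * u1 (s*k) / sqrt (1 - (u1 (s*k))\<^sup>2) / k) = (\<lambda>s. s * v1 s / sqrt (1 - (v1 s)\<^sup>2))"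
      unfolding v1_def using k by (auto simp: field_simps)
    moreover have "((r*k) * \<alpha> / (u (r*k) * sqrt (1 - (u1 (r*k))\<^sup>2))) * k / k = r * \<alpha> / (v r * sqrt (1 - (v1 r)\<^sup>2))"
      unfolding v_def v1_def using k by (simp add: field_simps)
    ultimately show "((\<lambda>s. s * v1 s / sqrt (1 - (v1 s)\<^sup>2)) has_real_derivative
               (r * \<alpha> / (v r * sqrt (1 - (v1 r)\<^sup>2)))) (at r)" by simp
  next
    show "v 0 = a / k" unfolding v_def using u0 by simp
    show "v1 0 = 0" unfolding v1_def using u10 by simp
  qed
  then show ?thesis unfolding v_def .
qed

lemma sol_lip:
  assumes sol: "is_solution \<alpha> a \<delta> u" and x: "x \<in> {0..\<delta>}" and y: "y \<in> {0..\<delta>}"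
  shows "\<bar>u x - u y\<bar> \<le> \<bar>x - y\<bar>"
proof -
  obtain u1 u2 where C2: "C2_on \<delta> u u1 u2" and pos: "\<forall>r\<in>{0..\<delta>}. u r > 0 \<and> \<bar>u1 r\<bar> < 1"
    using sol unfolding is_solution_def by blast
  have du: "\<And>r. r \<in> {0..\<delta>} \<Longrightarrow> (u has_real_derivative u1 r) (at r within {0..\<delta>})"
    using C2 unfolding C2_on_def by auto
  have "norm (u x - u y) \<le> 1 * norm (x - y)"
    by (rule field_differentiable_bound[OF convex_real_interval(5) du _ x y])
       (use pos in \<open>auto simp: less_imp_le\<close>)
  then show ?thesis by simp
qed

lemma sol_init: "is_solution \<alpha> a \<delta> u \<Longrightarrow> u 0 = a"
  unfolding is_solution_def by blast



lemma Ubound: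
  fixes u :: "real \<Rightarrow> real"
  assumes lip: "\<And>x y. x \<in> {0..\<delta>} \<Longrightarrow> y \<in> {0..\<delta>} \<Longrightarrow> \<bar>u x - u y\<bar> \<le> \<bar>x - y\<bar>"
    and u0: "u 0 = a" and a: "a > 0" and d: "\<delta> > 0"
    and v: "a/2 < v" "v \<le> 2*a" and w: "a/2 < w" "w \<le> 2*a" and r: "r \<in> {0..\<delta>/2}"
  shows "\<bar>u (r*(a/w)) / (a/w) - u (r*(a/v)) / (a/v)\<bar> \<le> (a + 5*\<delta>)/a * \<bar>w - v\<bar>"
proof -
  have vp: "v > 0" and wp: "w > 0" using v w a by auto
  have kw2: "a/w < 2" using w a by (simp add: divide_less_eq)
  have kv2: "a/v < 2" using v a by (simp add: divide_less_eq)
  have xw: "r*(a/w) \<in> {0..\<delta>}"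
  proof -
    have "r*(a/w) \<le> (\<delta>/2) * 2" using r kw2 a wp by (intro mult_mono) auto
    then show ?thesis using r a wp by auto
  qed
  have xv: "r*(a/v) \<in> {0..\<delta>}"
  proof -
    have "r*(a/v) \<le> (\<delta>/2) * 2" using r kv2 a vp by (intro mult_mono) auto
    then show ?thesis using r a vp by auto
  qed
  define A where "A = u (r*(a/w))"
  define B where "B = u (r*(a/v))"
  have Ab: "\<bar>A\<bar> \<le> a + \<delta>"
    using lip[OF xw, of 0] xw u0 a unfolding A_def by auto
  have "r*(a/w) - r*(a/v) = r * (a/w - a/v)" by (rule right_diff_distrib[symmetric])
  then have e: "\<bar>r*(a/w) - r*(a/v)\<bar> = r * \<bar>a/w - a/v\<bar>"
    using r by (metis abs_mult abs_of_nonneg atLeastAtMost_iff)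
  have AB: "\<bar>A - B\<bar> \<le> r * \<bar>a/w - a/v\<bar>"
    using lip[OF xw xv] e unfolding A_def B_def by linarith
  have kk: "\<bar>a/w - a/v\<bar> \<le> 4 * \<bar>w - v\<bar> / a"
  proof -
    have "a/w - a/v = a * (v - w) / (w * v)" using vp wp by (simp add: field_simps)
    then have "\<bar>a/w - a/v\<bar> = a * \<bar>w - v\<bar> / (w * v)" using a vp wp by (simp add: abs_div abs_mult abs_minus_commute)
    also have "\<dots> \<le> a * \<bar>w - v\<bar> / (a/2 * (a/2))"
      using v w a by (intro divide_left_mono mult_mono) auto
    also have "\<dots> = 4 * \<bar>w - v\<bar> / a" using a by (simp add: field_simps power2_eq_square)
    finally show ?thesis .
  qed
  have vAB: "v * \<bar>A - B\<bar> \<le> 4 * \<delta> * \<bar>w - v\<bar>"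
  proof -
    have nn: "0 \<le> 4 * \<bar>w - v\<bar> / a" using a by simp
    have "r * \<bar>a/w - a/v\<bar> \<le> r * (4 * \<bar>w - v\<bar> / a)" using kk r by (intro mult_left_mono) auto
    also have "\<dots> \<le> (\<delta>/2) * (4 * \<bar>w - v\<bar> / a)" using r nn by (intro mult_right_mono) auto
    finally have h: "\<bar>A - B\<bar> \<le> (\<delta>/2) * (4 * \<bar>w - v\<bar> / a)" using AB by linarith
    have "v * \<bar>A - B\<bar> \<le> (2*a) * ((\<delta>/2) * (4 * \<bar>w - v\<bar> / a))"
      using v vp h by (intro mult_mono) auto
    also have "\<dots> = 4 * \<delta> * \<bar>w - v\<bar>" using a by (simp add: field_simps)
    finally show ?thesis .
  qed
  have "u (r*(a/w)) / (a/w) - u (r*(a/v)) / (a/v) = ((w - v) * A + v * (A - B)) / a"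
    unfolding A_def[symmetric] B_def[symmetric] using a vp wp by (simp add: field_simps)
  then have "\<bar>u (r*(a/w)) / (a/w) - u (r*(a/v)) / (a/v)\<bar> = \<bar>(w - v) * A + v * (A - B)\<bar> / a"
    using a by (simp add: abs_div)
  also have "\<dots> \<le> (\<bar>w - v\<bar> * (a + \<delta>) + 4 * \<delta> * \<bar>w - v\<bar>) / a"
  proof (intro divide_right_mono)
    have "\<bar>(w - v) * A + v * (A - B)\<bar> \<le> \<bar>w - v\<bar> * \<bar>A\<bar> + v * \<bar>A - B\<bar>"
      using vp by (metis abs_mult abs_of_pos abs_triangle_ineq)
    also have "\<dots> \<le> \<bar>w - v\<bar> * (a + \<delta>) + 4 * \<delta> * \<bar>w - v\<bar>"
      using Ab vAB by (intro add_mono mult_left_mono) auto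
    finally show "\<bar>(w - v) * A + v * (A - B)\<bar> \<le> \<bar>w - v\<bar> * (a + \<delta>) + 4 * \<delta> * \<bar>w - v\<bar>" .
  qed (use a in simp)
  also have "\<dots> = (a + 5*\<delta>)/a * \<bar>w - v\<bar>" by (simp add: field_simps)
  finally show ?thesis .
qed

theorem theorem3p2:
  fixes \<alpha> u0 :: real
  assumes "\<alpha> \<noteq> 0" and "u0 > 0"
  shows "\<exists>\<delta>>0. \<exists>\<epsilon>>0. \<exists>U :: real \<Rightarrow> real \<Rightarrow> real.
           (\<forall>v0\<in>ball u0 \<epsilon>. is_solution \<alpha> v0 \<delta> (U v0)) \<and>
           (\<forall>v0\<in>ball u0 \<epsilon>. \<forall>e>0. \<exists>d>0. \<forall>w\<in>ball u0 \<epsilon>. \<bar>w - v0\<bar> < d \<longrightarrow>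
               (\<forall>r\<in>{0..\<delta>}. \<bar>U w r - U v0 r\<bar> < e))"
proof -
  have a: "u0 > 0" by fact
  obtain \<delta> u where d: "\<delta> > 0" and sol: "is_solution \<alpha> u0 \<delta> u"
    using exist1[OF a, of \<alpha>] by blast
  define U where "U = (\<lambda>v0 r. u (r * (u0/v0)) / (u0/v0))"
  have inb: "u0/2 < v \<and> v \<le> 2*u0" if "v \<in> ball u0 (u0/2)" for v
  proof -
    have "\<bar>u0 - v\<bar> < u0/2" using that by (simp add: dist_real_def)
    then show ?thesis using a by arith
  qed
  have part1: "\<forall>v0\<in>ball u0 (u0/2). is_solution \<alpha> v0 (\<delta>/2) (U v0)"
  proof
    fix v0 assume v0: "v0 \<in> ball u0 (u0/2)"
    have vp: "v0 > 0" using inb[OF v0] a by linarith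
    have k: "u0/v0 > 0" using vp a by simp
    have k2: "u0/v0 < 2" using inb[OF v0] a vp by (simp add: divide_less_eq)
    have "\<delta>/2 * (u0/v0) \<le> \<delta>/2 * 2" using k2 d by (intro mult_left_mono) auto
    then have dk: "\<delta>/2 * (u0/v0) \<le> \<delta>" by simp
    from scale[OF sol k dk]
    show "is_solution \<alpha> v0 (\<delta>/2) (U v0)" unfolding U_def using vp a by simp
  qed
  have part2: "\<forall>v0\<in>ball u0 (u0/2). \<forall>e>0. \<exists>d>0. \<forall>w\<in>ball u0 (u0/2). \<bar>w - v0\<bar> < d \<longrightarrow>
               (\<forall>r\<in>{0..\<delta>/2}. \<bar>U w r - U v0 r\<bar> < e)"
  proof (intro ballI allI impI)
    fix v0 e :: real assume v0: "v0 \<in> ball u0 (u0/2)" and e: "e > 0"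
    define C where "C = (u0 + 5*\<delta>)/u0"
    have C: "C > 0" unfolding C_def using a d by simp
    have lip: "\<And>x y. x \<in> {0..\<delta>} \<Longrightarrow> y \<in> {0..\<delta>} \<Longrightarrow> \<bar>u x - u y\<bar> \<le> \<bar>x - y\<bar>"
      by (rule sol_lip[OF sol])
    show "\<exists>d>0. \<forall>w\<in>ball u0 (u0/2). \<bar>w - v0\<bar> < d \<longrightarrow> (\<forall>r\<in>{0..\<delta>/2}. \<bar>U w r - U v0 r\<bar> < e)"
    proof (rule exI[of _ "e / C"], intro conjI ballI impI)
      show "e / C > 0" using e C by simp
      fix w r assume w: "w \<in> ball u0 (u0/2)" and wv: "\<bar>w - v0\<bar> < e / C" and r: "r \<in> {0..\<delta>/2}"
      have "\<bar>U w r - U v0 r\<bar> \<le> C * \<bar>w - v0\<bar>"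
        unfolding U_def C_def
        using Ubound[OF lip sol_init[OF sol] a d _ _ _ _ r] inb[OF v0] inb[OF w] by auto
      also have "\<dots> < C * (e / C)" using wv C by (intro mult_strict_left_mono) auto
      also have "\<dots> = e" using C by simp
      finally show "\<bar>U w r - U v0 r\<bar> < e" .
    qed
  qed
  show ?thesis
    by (rule exI[of _ "\<delta>/2"], rule conjI, use d in simp, rule exI[of _ "u0/2"], rule conjI, use a in simp,
        rule exI[of _ U], use part1 part2 in blast)
qed


end
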